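(* Let $n \ge 1$, let $\beta_w, \beta_n \in (0,1)$, and let $w_1, \dots, w_n \in \mathbb{R}_{\ge 0}$ with $W := \sum_{i=1}^n w_i \neq 0$. For a vector $t = (t_1,\dots,t_n) \in \mathbb{Z}_{\ge 0}^n$ with $T := \sum_{i=1}^n t_i$, the following are equivalent: (1) for every $S \subseteq [n]$ with $w(S) > \beta_w W$ we have $t(S) > \beta_n T$; (2) for every $S \subseteq [n]$ with $w(S) < (1-\beta_w) W$ we have $t(S) < (1-\beta_n) T$. Consequently, the Weight Qualification problem with parameters $(\beta_w, \beta_n, w_1,\dots,w_n)$ and the Weight Restriction problem with parameters $(1-\beta_w, 1-\beta_n, w_1,\dots,w_n)$ are identical (same feasible sets and same objective).
   Context: $[n] := \{1,\dots,n\}$; for $S \subseteq [n]$, $w(S) := \sum_{i \in S} w_i$ and $t(S) := \sum_{i\in S} t_i$. Weight Restriction with parameters $(\alpha_w,\alpha_n, w_1,\dots,w_n)$: find $t \in \mathbb{Z}_{\ge 0}^n$ minimizing $T$ subject to: for all $S\subseteq[n]$ with $w(S) < \alpha_w W$, $t(S) < \alpha_n T$. Weight Qualification with parameters $(\beta_w,\beta_n,w_1,\dots,w_n)$: find $t \in \mathbb{Z}_{\ge 0}^n$ minimizing $T$ subject to: for all $S \subseteq [n]$ with $w(S) > \beta_w W$, $t(S) > \beta_n T$. *)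

theory Defs
  imports Complex_Main
begin

(* Indices are [n] = {1..n}; w :: nat => real gives weights w_i, t :: nat => nat the
   nonnegative integer tickets t_i.  Values outside {1..n} are irrelevant. *)

definition wsum :: "(nat \<Rightarrow> real) \<Rightarrow> nat set \<Rightarrow> real" where
  "wsum w S = (\<Sum>i\<in>S. w i)"

definition tsum :: "(nat \<Rightarrow> nat) \<Rightarrow> nat set \<Rightarrow> real" where
  "tsum t S = real (\<Sum>i\<in>S. t i)"

definition wq_feasible :: "real \<Rightarrow> real \<Rightarrow> nat \<Rightarrow> (nat \<Rightarrow> real) \<Rightarrow> (nat \<Rightarrow> nat) \<Rightarrow> bool" where
  "wq_feasible bw bn n w t \<longleftrightarrow>
     (\<forall>S. S \<subseteq> {1..n} \<longrightarrow> wsum w S > bw * wsum w {1..n} \<longrightarrow> tsum t S > bn * tsum t {1..n})"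

definition wr_feasible :: "real \<Rightarrow> real \<Rightarrow> nat \<Rightarrow> (nat \<Rightarrow> real) \<Rightarrow> (nat \<Rightarrow> nat) \<Rightarrow> bool" where
  "wr_feasible aw an n w t \<longleftrightarrow>
     (\<forall>S. S \<subseteq> {1..n} \<longrightarrow> wsum w S < aw * wsum w {1..n} \<longrightarrow> tsum t S < an * tsum t {1..n})"

definition wq_optimal :: "real \<Rightarrow> real \<Rightarrow> nat \<Rightarrow> (nat \<Rightarrow> real) \<Rightarrow> (nat \<Rightarrow> nat) \<Rightarrow> bool" where
  "wq_optimal bw bn n w t \<longleftrightarrow> wq_feasible bw bn n w t \<and>
     (\<forall>t'. wq_feasible bw bn n w t' \<longrightarrow> tsum t {1..n} \<le> tsum t' {1..n})"

definition wr_optimal :: "real \<Rightarrow> real \<Rightarrow> nat \<Rightarrow> (nat \<Rightarrow> real) \<Rightarrow> (nat \<Rightarrow> nat) \<Rightarrow> bool" where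
  "wr_optimal aw an n w t \<longleftrightarrow> wr_feasible aw an n w t \<and>
     (\<forall>t'. wr_feasible aw an n w t' \<longrightarrow> tsum t {1..n} \<le> tsum t' {1..n})"

end

theory Submission
  imports Defs
begin

lemma wsum_compl:
  assumes "S \<subseteq> {1..n}"
  shows "wsum w ({1..n} - S) = wsum w {1..n} - wsum w S"
  using assms unfolding wsum_def by (simp add: sum_diff finite_subset)

lemma tsum_compl:
  assumes "S \<subseteq> {1..n}"
  shows "tsum t ({1..n} - S) = tsum t {1..n} - tsum t S"
  using assms unfolding tsum_def by (simp add: of_nat_sum sum_diff finite_subset)

lemma feas_equiv:
  "wq_feasible bw bn n w t \<longleftrightarrow> wr_feasible (1 - bw) (1 - bn) n w t"
proof
  assume H: "wq_feasible bw bn n w t"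
  show "wr_feasible (1 - bw) (1 - bn) n w t"
    unfolding wr_feasible_def
  proof (intro allI impI)
    fix S assume S: "S \<subseteq> {1..n}" and lt: "wsum w S < (1 - bw) * wsum w {1..n}"
    have "{1..n} - S \<subseteq> {1..n}" by blast
    moreover have "wsum w ({1..n} - S) > bw * wsum w {1..n}"
      using wsum_compl[OF S, of w] lt by (simp add: algebra_simps)
    ultimately have "tsum t ({1..n} - S) > bn * tsum t {1..n}"
      using H unfolding wq_feasible_def by blast
    then show "tsum t S < (1 - bn) * tsum t {1..n}"
      using tsum_compl[OF S, of t] by (simp add: algebra_simps)
  qed
next
  assume H: "wr_feasible (1 - bw) (1 - bn) n w t"
  show "wq_feasible bw bn n w t"
    unfolding wq_feasible_def
  proof (intro allI impI)
    fix S assume S: "S \<subseteq> {1..n}" and gt: "wsum w S > bw * wsum w {1..n}"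
    have "{1..n} - S \<subseteq> {1..n}" by blast
    moreover have "wsum w ({1..n} - S) < (1 - bw) * wsum w {1..n}"
      using wsum_compl[OF S, of w] gt by (simp add: algebra_simps)
    ultimately have "tsum t ({1..n} - S) < (1 - bn) * tsum t {1..n}"
      using H unfolding wr_feasible_def by blast
    then show "tsum t S > bn * tsum t {1..n}"
      using tsum_compl[OF S, of t] by (simp add: algebra_simps)
  qed
qed

theorem theorem2:
  fixes n :: nat and bw bn :: real and w :: "nat \<Rightarrow> real" and t :: "nat \<Rightarrow> nat"
  assumes "n \<ge> 1"
    and "0 < bw" "bw < 1" "0 < bn" "bn < 1"
    and "\<forall>i\<in>{1..n}. w i \<ge> 0"
    and "wsum w {1..n} \<noteq> 0"
  shows "((\<forall>S. S \<subseteq> {1..n} \<longrightarrow> wsum w S > bw * wsum w {1..n} \<longrightarrow> tsum t S > bn * tsum t {1..n})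
          \<longleftrightarrow>
          (\<forall>S. S \<subseteq> {1..n} \<longrightarrow> wsum w S < (1 - bw) * wsum w {1..n} \<longrightarrow> tsum t S < (1 - bn) * tsum t {1..n}))
       \<and> (\<forall>t'. wq_feasible bw bn n w t' \<longleftrightarrow> wr_feasible (1 - bw) (1 - bn) n w t')
       \<and> (\<forall>t'. wq_optimal bw bn n w t' \<longleftrightarrow> wr_optimal (1 - bw) (1 - bn) n w t')"
proof -
  have A: "wq_feasible bw bn n w t \<longleftrightarrow> wr_feasible (1 - bw) (1 - bn) n w t"
    by (rule feas_equiv)
  have B: "\<forall>t'. wq_feasible bw bn n w t' \<longleftrightarrow> wr_feasible (1 - bw) (1 - bn) n w t'"
    using feas_equiv by blast
  have C: "\<forall>t'. wq_optimal bw bn n w t' \<longleftrightarrow> wr_optimal (1 - bw) (1 - bn) n w t'"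
    unfolding wq_optimal_def wr_optimal_def using B by simp
  show ?thesis using A B C unfolding wq_feasible_def wr_feasible_def by blast
qed

end
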